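(* Let $d\ge 1$ and let $D=\{(x_i,y_i)\mid i=1,\dots,n\}$ be a finite dataset with $x_i\in\mathbb{R}^d$, $y_i\in\mathbb{R}$, such that for all $i,j$, $y_i\neq y_j$ implies $x_i\neq x_j$. Then there exists a convex-area-wise linear function $f\in CALF(\mathbb{R}^d)$ fitting $D$, i.e. with $f(x_i)=y_i$ for all $i=1,\dots,n$. Furthermore, there exist $d\ge 1$ and a function $f:\mathbb{R}^d\to\mathbb{R}$ such that $f\in CALF(\mathbb{R}^d)$ but $f$ is not a PLDC function.
   Context: A linear (affine) function on $\mathbb{R}^d$ is one of the form $f(x)=\beta_0+\beta_1x_1+\dots+\beta_dx_d$. A convex area is a set of the form $C=\bigcap_{k=1}^{m}\{x\in\mathbb{R}^d\mid \alpha_k\cdot x+\gamma_k\le 0\}$ with $m\ge 1$, $\alpha_k\in\mathbb{R}^d$, $\gamma_k\in\mathbb{R}$. Convex-area-wise linear function (CALF): for $\Omega\subseteq\mathbb{R}^d$, let $H=\{(f_i,C_i)\mid 0\le i\le M\}$ ($M\ge 0$ an integer) where each $f_i$ is a linear function, $C_1,\dots,C_M$ are pairwise disjoint convex areas, and $C_0=\Omega\setminus\bigcup_{i=1}^M C_i$. The function $f_H:\Omega\to\mathbb{R}$, $f_H(x)=\sum_{i=0}^M I_i(x)f_i(x)$, where $I_i$ is the indicator function of $C_i$, is called a convex-area-wise linear function; $CALF(\Omega)$ denotes the set of all such functions (over all choices of $M$ and $H$). PLDC function: a function $f:\mathbb{R}^d\to\mathbb{R}$ is PLDC if there exist $K\in\mathbb{Z}^+$,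 $\alpha_k,\beta_k\in\mathbb{R}^d$ and $c_k,c'_k\in\mathbb{R}$ ($k=1,\dots,K$) such that $f(x)=\max_{1\le k\le K}\{\alpha_k\cdot x+c_k\}-\max_{1\le k\le K}\{\beta_k\cdot x+c'_k\}$ for all $x$. *)

theory Defs
  imports Main "HOL-Library.Indicator_Function"
begin

text \<open>Points of R^d are represented as functions nat => real vanishing
  from index d on (so the dimension d can be quantified inside formulas).\<close>

definition Rd :: "nat \<Rightarrow> (nat \<Rightarrow> real) set" where
  "Rd d = {x. \<forall>i\<ge>d. x i = 0}"

definition lin_fun :: "nat \<Rightarrow> real \<Rightarrow> (nat \<Rightarrow> real) \<Rightarrow> (nat \<Rightarrow> real) \<Rightarrow> real" where
  "lin_fun d b0 b x = b0 + (\<Sum>i<d. b i * x i)"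

definition convex_area :: "nat \<Rightarrow> (nat \<Rightarrow> real) set \<Rightarrow> bool" where
  "convex_area d C \<longleftrightarrow> (\<exists>m::nat. \<exists>(\<alpha>::nat \<Rightarrow> nat \<Rightarrow> real) (\<gamma>::nat \<Rightarrow> real).
      m \<ge> 1 \<and> C = {x \<in> Rd d. \<forall>k\<in>{1..m}. (\<Sum>i<d. \<alpha> k i * x i) + \<gamma> k \<le> 0})"

definition CALF :: "nat \<Rightarrow> (nat \<Rightarrow> real) set \<Rightarrow> ((nat \<Rightarrow> real) \<Rightarrow> real) \<Rightarrow> bool" where
  "CALF d \<Omega> f \<longleftrightarrow> (\<exists>(M::nat) (b0::nat \<Rightarrow> real) (b::nat \<Rightarrow> nat \<Rightarrow> real)
        (C::nat \<Rightarrow> (nat \<Rightarrow> real) set).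
      (\<forall>i\<in>{1..M}. convex_area d (C i)) \<and>
      (\<forall>i\<in>{1..M}. \<forall>j\<in>{1..M}. i \<noteq> j \<longrightarrow> C i \<inter> C j = {}) \<and>
      C 0 = \<Omega> - (\<Union>i\<in>{1..M}. C i) \<and>
      (\<forall>x\<in>\<Omega>. f x = (\<Sum>i\<in>{0..M}. indicator (C i) x * lin_fun d (b0 i) (b i) x)))"

definition PLDC :: "nat \<Rightarrow> ((nat \<Rightarrow> real) \<Rightarrow> real) \<Rightarrow> bool" where
  "PLDC d f \<longleftrightarrow> (\<exists>(K::nat) (\<alpha>::nat \<Rightarrow> nat \<Rightarrow> real) (\<beta>::nat \<Rightarrow> nat \<Rightarrow> real)
        (c::nat \<Rightarrow> real) (c'::nat \<Rightarrow> real).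
      K \<ge> 1 \<and>
      (\<forall>x\<in>Rd d. f x = Max ((\<lambda>k. (\<Sum>i<d. \<alpha> k i * x i) + c k) ` {1..K})
                     - Max ((\<lambda>k. (\<Sum>i<d. \<beta> k i * x i) + c' k) ` {1..K})))"

end

theory Submission
  imports Defs "HOL-Analysis.Analysis"
begin


lemma convex_area_empty: "convex_area d {}"
  unfolding convex_area_def
  by (rule exI[of _ 1], rule exI[of _ "\<lambda>_ _. 0"], rule exI[of _ "\<lambda>_. 1"]) auto

lemma sum_delta_x: "j < (d::nat) \<Longrightarrow> (\<Sum>i<d. (if i = j then c else 0) * x i) = c * (x j :: real)"
proof -
  assume j: "j < d"
  have "(\<Sum>i<d. (if i = j then c else 0) * x i) = (\<Sum>i<d. if i = j then c * x i else 0)"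
    by (intro sum.cong) auto
  also have "\<dots> = c * x j" using j by (subst sum.delta) auto
  finally show ?thesis .
qed

lemma convex_area_single:
  assumes "d \<ge> 1" "p \<in> Rd d"
  shows "convex_area d {p}"
proof -
  define \<alpha> where "\<alpha> = (\<lambda>k i. if k \<le> d then (if i = k - 1 then (1::real) else 0)
                               else (if i = k - d - 1 then -1 else 0))"
  define \<gamma> where "\<gamma> = (\<lambda>k. if k \<le> d then - p (k - 1) else p (k - d - 1))"
  have "{p} = {x \<in> Rd d. \<forall>k\<in>{1..2*d}. (\<Sum>i<d. \<alpha> k i * x i) + \<gamma> k \<le> 0}"
  proof (intro set_eqI iffI)
    fix x assume "x \<in> {p}"
    then have x: "x = p" by simp
    have "\<forall>k\<in>{1..2*d}. (\<Sum>i<d. \<alpha> k i * p i) + \<gamma> k \<le> 0"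
    proof (intro ballI)
      fix k assume k: "k \<in> {1..2*d}"
      show "(\<Sum>i<d. \<alpha> k i * p i) + \<gamma> k \<le> 0"
      proof (cases "k \<le> d")
        case True
        then have "\<alpha> k = (\<lambda>i. if i = k-1 then 1 else 0)" by (simp add: \<alpha>_def fun_eq_iff)
        then have "(\<Sum>i<d. \<alpha> k i * p i) = 1 * p (k-1)"
          using k True by (simp only:) (intro sum_delta_x, auto)
        then show ?thesis using True by (simp add: \<gamma>_def)
      next
        case False
        then have "\<alpha> k = (\<lambda>i. if i = k-d-1 then -1 else 0)" by (simp add: \<alpha>_def fun_eq_iff)
        then have "(\<Sum>i<d. \<alpha> k i * p i) = (-1) * p (k-d-1)"
          using k False by (simp only:) (intro sum_delta_x, auto)
        then show ?thesis using False by (simp add: \<gamma>_def)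
      qed
    qed
    then show "x \<in> {x \<in> Rd d. \<forall>k\<in>{1..2*d}. (\<Sum>i<d. \<alpha> k i * x i) + \<gamma> k \<le> 0}"
      using x assms(2) by simp
  next
    fix x assume "x \<in> {x \<in> Rd d. \<forall>k\<in>{1..2*d}. (\<Sum>i<d. \<alpha> k i * x i) + \<gamma> k \<le> 0}"
    then have xR: "x \<in> Rd d" and H: "\<And>k. k \<in> {1..2*d} \<Longrightarrow> (\<Sum>i<d. \<alpha> k i * x i) + \<gamma> k \<le> 0" by auto
    have "x i = p i" for i
    proof (cases "i < d")
      case True
      have a1: "\<alpha> (i+1) = (\<lambda>i'. if i' = i then 1 else 0)" using True by (simp add: \<alpha>_def fun_eq_iff)
      have a2: "\<alpha> (i+1+d) = (\<lambda>i'. if i' = i then -1 else 0)" using True by (simp add: \<alpha>_def fun_eq_iff)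
      have "(\<Sum>i'<d. \<alpha> (i+1) i' * x i') = 1 * x i"
        unfolding a1 using True by (rule sum_delta_x)
      moreover have "(\<Sum>i'<d. \<alpha> (i+1+d) i' * x i') = (-1) * x i"
        unfolding a2 using True by (rule sum_delta_x)
      moreover have "(\<Sum>i'<d. \<alpha> (i+1) i' * x i') + \<gamma> (i+1) \<le> 0" using H[of "i+1"] True by auto
      moreover have "(\<Sum>i'<d. \<alpha> (i+1+d) i' * x i') + \<gamma> (i+1+d) \<le> 0" using H[of "i+1+d"] True by auto
      ultimately show ?thesis using True by (simp add: \<gamma>_def)
    next
      case False
      then show ?thesis using xR assms(2) by (simp add: Rd_def)
    qed
    then show "x \<in> {p}" by auto
  qed
  then show ?thesis unfolding convex_area_def using assms(1)
    by (intro exI[of _ "2*d"] exI[of _ \<alpha>] exI[of _ \<gamma>]) auto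
qed

lemma cont_Max_aff:
  fixes a c :: "nat \<Rightarrow> real"
  assumes "K \<ge> 1"
  shows "continuous_on UNIV (\<lambda>t::real. Max ((\<lambda>k. a k * t + c k) ` {1..K}))"
  using assms
proof (induction K rule: nat_induct_at_least)
  case base
  then show ?case by (simp add: continuous_intros)
next
  case (Suc n)
  have eq: "(\<lambda>t::real. Max ((\<lambda>k. a k * t + c k) ` {1..Suc n})) =
     (\<lambda>t. max (a (Suc n) * t + c (Suc n)) (Max ((\<lambda>k. a k * t + c k) ` {1..n})))"
  proof
    fix t
    have "{1..Suc n} = insert (Suc n) {1..n}" by auto
    then show "Max ((\<lambda>k. a k * t + c k) ` {1..Suc n}) =
       max (a (Suc n) * t + c (Suc n)) (Max ((\<lambda>k. a k * t + c k) ` {1..n}))"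
      using Suc.hyps by simp
  qed
  show ?case unfolding eq by (intro continuous_on_max continuous_intros Suc.IH)
qed

lemma lin_fun_zero: "lin_fun d c (\<lambda>_. 0) x = c"
  by (simp add: lin_fun_def)

lemma part1:
  fixes xs :: "nat \<Rightarrow> nat \<Rightarrow> real" and ys :: "nat \<Rightarrow> real"
  assumes d: "d \<ge> 1" and xR: "\<forall>i\<in>{1..n}. xs i \<in> Rd d"
    and yx: "\<forall>i\<in>{1..n}. \<forall>j\<in>{1..n}. ys i \<noteq> ys j \<longrightarrow> xs i \<noteq> xs j"
  shows "\<exists>f. CALF d (Rd d) f \<and> (\<forall>i\<in>{1..n}. f (xs i) = ys i)"
proof -
  define fst' where "fst' i \<longleftrightarrow> (\<forall>k\<in>{1..<i}. xs k \<noteq> xs i)" for i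
  define C where "C i = (if i = 0 then Rd d - (\<Union>j\<in>{1..n}. if fst' j then {xs j} else {})
                        else if fst' i then {xs i} else {})" for i
  define b0 where "b0 i = (if i = 0 then 0 else ys i)" for i
  define f where "f x = (\<Sum>i\<in>{0..n}. indicator (C i) x * lin_fun d (b0 i) (\<lambda>_. 0) x)" for x
  have CALF: "CALF d (Rd d) f"
    unfolding CALF_def
  proof (intro exI[of _ n] exI[of _ b0] exI[of _ "\<lambda>_ _. 0"] exI[of _ C] conjI)
    show "\<forall>i\<in>{1..n}. convex_area d (C i)"
      using convex_area_single[OF d] convex_area_empty xR by (auto simp: C_def)
    show "\<forall>i\<in>{1..n}. \<forall>j\<in>{1..n}. i \<noteq> j \<longrightarrow> C i \<inter> C j = {}"
    proof (intro ballI impI)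
      fix i j assume i: "i \<in> {1..n}" and j: "j \<in> {1..n}" and ij: "i \<noteq> j"
      show "C i \<inter> C j = {}"
      proof (cases "i < j")
        case True then show ?thesis using i j by (auto simp: C_def fst'_def)
      next
        case False then have "j < i" using ij by simp
        then show ?thesis using i j by (auto simp: C_def fst'_def)
      qed
    qed
    show "C 0 = Rd d - (\<Union>i\<in>{1..n}. C i)" by (auto simp: C_def)
    show "\<forall>x\<in>Rd d. f x = (\<Sum>i\<in>{0..n}. indicator (C i) x * lin_fun d (b0 i) (\<lambda>_. 0) x)"
      by (simp add: f_def)
  qed
  have fit: "f (xs j) = ys j" if j: "j \<in> {1..n}" for j
  proof -
    define j0 where "j0 = (LEAST k. k \<in> {1..n} \<and> xs k = xs j)"
    have j0: "j0 \<in> {1..n} \<and> xs j0 = xs j" unfolding j0_def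
      by (rule LeastI[of _ j]) (use j in auto)
    have j0le: "\<And>k. k \<in> {1..n} \<Longrightarrow> xs k = xs j \<Longrightarrow> j0 \<le> k"
      unfolding j0_def by (rule Least_le) auto
    have fj0: "fst' j0"
      unfolding fst'_def using j0le j0 by fastforce
    have mem: "xs j \<in> C i \<longleftrightarrow> i = j0" if i: "i \<in> {0..n}" for i
    proof (cases "i = 0")
      case True
      then show ?thesis using j0 fj0 by (auto simp: C_def) (metis IntI atLeastAtMost_iff mem_Collect_eq)
    next
      case False
      show ?thesis
      proof
        assume "xs j \<in> C i"
        then have "fst' i" "xs i = xs j" using False by (auto simp: C_def split: if_splits)
        moreover have "j0 \<le> i" using j0le False i \<open>xs i = xs j\<close> by auto
        ultimately show "i = j0" using j0 unfolding fst'_def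
          by (metis atLeastLessThan_iff le_neq_implies_less atLeastAtMost_iff)
      next
        assume "i = j0" then show "xs j \<in> C i" using j0 fj0 by (auto simp: C_def)
      qed
    qed
    have "f (xs j) = (\<Sum>i\<in>{0..n}. if i = j0 then ys j0 else 0)"
      unfolding f_def lin_fun_zero
      by (intro sum.cong refl) (use mem j0 in \<open>auto simp: b0_def indicator_def\<close>)
    also have "\<dots> = ys j0" using j0 by (subst sum.delta) auto
    also have "\<dots> = ys j" using yx j j0 by metis
    finally show ?thesis .
  qed
  show ?thesis using CALF fit by blast
qed



lemma part2: "\<exists>(d::nat) f. d \<ge> 1 \<and> CALF d (Rd d) f \<and> \<not> PLDC d f"
proof -
  define C1 where "C1 = {x \<in> Rd 1. x 0 \<le> (0::real)}"
  define C where "C i = (if i = 0 then Rd 1 - C1 else C1)" for i :: nat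
  define b0 where "b0 i = (if i = 0 then 0 else (1::real))" for i :: nat
  define f where "f x = (\<Sum>i\<in>{0..1}. indicator (C i) x * lin_fun 1 (b0 i) (\<lambda>_. 0) x)" for x
  have ca: "convex_area 1 C1"
    unfolding convex_area_def C1_def
    by (intro exI[of _ 1] exI[of _ "\<lambda>_ _. 1"] exI[of _ "\<lambda>_. 0"]) auto
  have CALF: "CALF 1 (Rd 1) f"
    unfolding CALF_def
    by (intro exI[of _ 1] exI[of _ b0] exI[of _ "\<lambda>_ _. 0"] exI[of _ C] conjI)
       (use ca in \<open>auto simp: C_def f_def\<close>)
  define pt where "pt t = (\<lambda>i::nat. if i = 0 then t else (0::real))" for t
  have ptR: "pt t \<in> Rd 1" for t by (simp add: pt_def Rd_def)
  have fpt: "f (pt t) = (if t \<le> 0 then 1 else 0)" for t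
    using ptR[of t] by (simp add: f_def C_def C1_def lin_fun_zero b0_def pt_def indicator_def)
  have "\<not> PLDC 1 f"
  proof
    assume "PLDC 1 f"
    then obtain K :: nat and \<alpha> \<beta> :: "nat \<Rightarrow> nat \<Rightarrow> real" and c c' :: "nat \<Rightarrow> real" where K: "K \<ge> 1" and
      eq: "\<forall>x\<in>Rd 1. f x = Max ((\<lambda>k. (\<Sum>i<1. \<alpha> k i * x i) + c k) ` {1..K})
                     - Max ((\<lambda>k. (\<Sum>i<1. \<beta> k i * x i) + c' k) ` {1..K})"
      unfolding PLDC_def by blast
    define g where "g t = Max ((\<lambda>k. \<alpha> k 0 * t + c k) ` {1..K}) - Max ((\<lambda>k. \<beta> k 0 * t + c' k) ` {1..K})" for t
    have fg: "f (pt t) = g t" for t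
      using eq[rule_format, OF ptR[of t]] by (simp add: g_def pt_def)
    have "continuous_on UNIV g"
      unfolding g_def by (intro continuous_on_diff cont_Max_aff K)
    then have "isCont g 0" by (simp add: continuous_on_eq_continuous_at)
    then have "(g \<longlongrightarrow> g 0) (at_right 0)"
      using tendsto_within_subset[of g "nhds (g 0)" 0 UNIV "{0<..}"] by (simp add: isCont_def)
    moreover have "(g \<longlongrightarrow> 0) (at_right 0)"
    proof (rule tendsto_eventually)
      show "\<forall>\<^sub>F t in at_right 0. g t = 0"
      proof (rule eventually_mono[OF eventually_at_right_less])
        fix t :: real assume "0 < t"
        then show "g t = 0" using fpt[of t] fg[of t] by simp
      qed
    qed
    ultimately have "g 0 = 0" by (rule tendsto_unique[OF trivial_limit_at_right_real])
    moreover have "g 0 = 1" using fpt[of 0] fg[of 0] by simp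
    ultimately show False by simp
  qed
  then show ?thesis using CALF by (intro exI[of _ 1] exI[of _ f]) auto
qed


theorem theorem1:
  shows "(\<forall>(d::nat) (n::nat) (xs::nat \<Rightarrow> nat \<Rightarrow> real) (ys::nat \<Rightarrow> real).
            d \<ge> 1 \<longrightarrow> (\<forall>i\<in>{1..n}. xs i \<in> Rd d) \<longrightarrow>
            (\<forall>i\<in>{1..n}. \<forall>j\<in>{1..n}. ys i \<noteq> ys j \<longrightarrow> xs i \<noteq> xs j) \<longrightarrow>
            (\<exists>f. CALF d (Rd d) f \<and> (\<forall>i\<in>{1..n}. f (xs i) = ys i)))
       \<and> (\<exists>(d::nat) f. d \<ge> 1 \<and> CALF d (Rd d) f \<and> \<not> PLDC d f)"
  using part1 part2 by blast

end
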